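(* For the intercept model, with $\hat{B} = G_{21}G_{11}^{-1}$ and $\hat{\alpha} = (-\hat{B}, I_r)\bar{\mathbf{x}}$, the ordinary least squares estimator of the matrix of mean vectors $$ \hat{U}_1(\hat{\alpha},\hat{B}) = \left(I_p + \hat{B}'\hat{B}\right)^{-1}\left(I_p, \hat{B}'\right)\left(X - \begin{pmatrix}\mathbf{0}\\ \hat{\alpha}\mathbf{1}_n'\end{pmatrix}\right) $$ equals $$ \hat{U}_1(\hat{\alpha},\hat{B}) = n^{-1} X_1\mathbf{1}_n\mathbf{1}_n' + \left(G_{11}G_{11}'X_1 + G_{11}G_{21}'X_2\right)C_n, $$ and in particular differs from the expression $\left(G_{11}G_{11}'X_1 + G_{11}G_{21}'X_2\right)C_n$ by the additional term $n^{-1}X_1\mathbf{1}_n\mathbf{1}_n'$.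
   Context: Multivariate errors-in-variables model: observed $X = (X_1', X_2')'$ where $X_1$ is $p\times n$ and $X_2$ is $r\times n$ (columns $\mathbf{x}_{1i}$, $\mathbf{x}_{2i}$, $i=1,\dots,n$), with $X = U + E$, $U = (U_1', U_2')'$, $U_2 = \alpha\mathbf{1}_n' + BU_1$, where $U_1$ ($p\times n$) is the matrix of unknown mean vectors, $B$ is $r\times p$, $\alpha$ is an $r$-vector, $\mathbf{1}_n$ is the $n$-vector of ones, and the columns of $E$ are i.i.d. with mean $\mathbf{0}$ and covariance $\sigma^2 I_{p+r}$. In the intercept model ($\alpha$ unknown), $C_n = I_n - n^{-1}\mathbf{1}_n\mathbf{1}_n'$. Let $W = XC_nX'$ with eigen-decomposition $W = GDG'$, $D$ diagonal with ordered eigenvalues and $G$ a $(p+r)\times(p+r)$ orthogonal matrix partitioned as $G = \begin{pmatrix} G_{11} & G_{12}\\ G_{21} & G_{22}\end{pmatrix}$ with $G_{11}$ of size $p\times p$ (assumed invertible). Let $\bar{\mathbf{x}} = n^{-1}X\mathbf{1}_n$. *)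

theory Defs
  imports "Jordan_Normal_Form.Matrix"
begin

text \<open>Inverse of a square matrix (meaningful when the matrix is invertible).\<close>
definition inv_mat :: "real mat \<Rightarrow> real mat" where
  "inv_mat A = (THE B. B \<in> carrier_mat (dim_row A) (dim_row A) \<and>
      A * B = 1\<^sub>m (dim_row A) \<and> B * A = 1\<^sub>m (dim_row A))"

text \<open>Horizontal concatenation (A, B) of two matrices with the same number of rows.\<close>
definition append_cols_mat :: "real mat \<Rightarrow> real mat \<Rightarrow> real mat" where
  "append_cols_mat A B = four_block_mat A B (0\<^sub>m 0 (dim_col A)) (0\<^sub>m 0 (dim_col B))"

definition ones_col :: "nat \<Rightarrow> real mat" where
  "ones_col n = mat n 1 (\<lambda>_. 1)"

definition ones_row :: "nat \<Rightarrow> real mat" where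
  "ones_row n = mat 1 n (\<lambda>_. 1)"

definition centering_mat :: "nat \<Rightarrow> real mat" where
  "centering_mat n = 1\<^sub>m n - (1 / real n) \<cdot>\<^sub>m (ones_col n * ones_row n)"

end

theory Submission imports Defs "Jordan_Normal_Form.Determinant" begin

lemma append_rows_mult:
  assumes A: "A \<in> carrier_mat n1 k" and B: "B \<in> carrier_mat n2 k" and C: "C \<in> carrier_mat k m"
  shows "(A @\<^sub>r B) * C = (A * C) @\<^sub>r (B * C)"
proof -
  have "(A @\<^sub>r B) * C = four_block_mat A (0\<^sub>m n1 0) B (0\<^sub>m n2 0) * four_block_mat C (0\<^sub>m k 0) (0\<^sub>m 0 m) (0\<^sub>m 0 0)"
  proof -
    have "four_block_mat C (0\<^sub>m k 0) (0\<^sub>m 0 m) (0\<^sub>m 0 0) = C" using C by (intro eq_matI, auto)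
    thus ?thesis using A B by (simp add: append_rows_def)
  qed
  also have "\<dots> = four_block_mat (A * C + 0\<^sub>m n1 0 * 0\<^sub>m 0 m) (A * 0\<^sub>m k 0 + 0\<^sub>m n1 0 * 0\<^sub>m 0 0)
      (B * C + 0\<^sub>m n2 0 * 0\<^sub>m 0 m) (B * 0\<^sub>m k 0 + 0\<^sub>m n2 0 * 0\<^sub>m 0 0)"
    by (rule mult_four_block_mat[OF A _ B], insert C, auto)
  also have "\<dots> = (A * C) @\<^sub>r (B * C)"
    using A B C by (simp add: append_rows_def)
  finally show ?thesis .
qed

lemma append_cols_mult:
  assumes A: "A \<in> carrier_mat m k1" and B: "B \<in> carrier_mat m k2"
    and C: "C \<in> carrier_mat k1 n" and D: "D \<in> carrier_mat k2 n"
  shows "append_cols_mat A B * (C @\<^sub>r D) = A * C + B * D"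
proof -
  have "append_cols_mat A B * (C @\<^sub>r D) = four_block_mat A B (0\<^sub>m 0 k1) (0\<^sub>m 0 k2) * four_block_mat C (0\<^sub>m k1 0) D (0\<^sub>m k2 0)"
    using A B C D by (simp add: append_rows_def append_cols_mat_def)
  also have "\<dots> = four_block_mat (A * C + B * D) (A * 0\<^sub>m k1 0 + B * 0\<^sub>m k2 0)
      (0\<^sub>m 0 k1 * C + 0\<^sub>m 0 k2 * D) (0\<^sub>m 0 k1 * 0\<^sub>m k1 0 + 0\<^sub>m 0 k2 * 0\<^sub>m k2 0)"
    by (rule mult_four_block_mat[OF A B _ _ C _ D], auto)
  also have "\<dots> = A * C + B * D"
    using A B C D by (intro eq_matI, auto)
  finally show ?thesis .
qed

lemma append_rows_minus:
  assumes A: "A \<in> carrier_mat n1 k" and B: "B \<in> carrier_mat n2 k"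
   and C: "C \<in> carrier_mat n1 k" and D: "D \<in> carrier_mat n2 k"
  shows "(A @\<^sub>r B) - (C @\<^sub>r D) = (A - C) @\<^sub>r (B - D)"
  using A B C D by (intro eq_matI, auto simp: append_rows_def)

lemma append_rows_smult:
  assumes A: "A \<in> carrier_mat n1 k" and B: "B \<in> carrier_mat n2 k"
  shows "c \<cdot>\<^sub>m (A @\<^sub>r B) = (c \<cdot>\<^sub>m A) @\<^sub>r (c \<cdot>\<^sub>m B)"
  using A B by (intro eq_matI, auto simp: append_rows_def)

lemma inv_mat_eq:
  assumes A: "A \<in> carrier_mat n n" and B: "B \<in> carrier_mat n n"
    and AB: "A * B = 1\<^sub>m n" and BA: "B * A = 1\<^sub>m n"
  shows "inv_mat A = B"
  unfolding inv_mat_def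
proof (rule the_equality)
  show "B \<in> carrier_mat (dim_row A) (dim_row A) \<and> A * B = 1\<^sub>m (dim_row A) \<and> B * A = 1\<^sub>m (dim_row A)"
    using A B AB BA by auto
next
  fix C assume C: "C \<in> carrier_mat (dim_row A) (dim_row A) \<and> A * C = 1\<^sub>m (dim_row A) \<and> C * A = 1\<^sub>m (dim_row A)"
  hence Cc: "C \<in> carrier_mat n n" and CA: "C * A = 1\<^sub>m n" using A by auto
  have "C = C * (A * B)" using AB Cc by simp
  also have "\<dots> = (C * A) * B" using Cc A B by simp
  also have "\<dots> = B" using CA B by simp
  finally show "C = B" .
qed

lemma invertible_obtain:
  assumes A: "A \<in> carrier_mat n n" and inv: "invertible_mat (A::real mat)"
  obtains B where "B \<in> carrier_mat n n" "A * B = 1\<^sub>m n" "B * A = 1\<^sub>m n"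
proof -
  from inv obtain B where 1: "A * B = 1\<^sub>m (dim_row A)" and 2: "B * A = 1\<^sub>m (dim_row B)"
    unfolding invertible_mat_def inverts_mat_def by auto
  have "dim_col B = n" using 1 A by (metis carrier_matD(1) index_mult_mat(3) index_one_mat(3))
  moreover have "dim_row B = n" using 2 A by (metis carrier_matD(2) index_mult_mat(3) index_one_mat(3))
  ultimately show ?thesis using that 1 2 A by auto
qed

theorem mainTheorem1:
  fixes p r n :: nat
    and X1 X2 G11 G12 G21 G22 D :: "real mat"
  assumes X1: "X1 \<in> carrier_mat p n"
    and X2: "X2 \<in> carrier_mat r n"
    and G11: "G11 \<in> carrier_mat p p"
    and G12: "G12 \<in> carrier_mat p r"
    and G21: "G21 \<in> carrier_mat r p"
    and G22: "G22 \<in> carrier_mat r r"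
    and D: "D \<in> carrier_mat (p + r) (p + r)"
    and D_diag: "diagonal_mat D"
    and D_ord: "\<forall>i j. i \<le> j \<and> j < p + r \<longrightarrow> D $$ (j, j) \<le> D $$ (i, i)"
    and G_orth1: "transpose_mat (four_block_mat G11 G12 G21 G22) * four_block_mat G11 G12 G21 G22
                    = 1\<^sub>m (p + r)"
    and G_orth2: "four_block_mat G11 G12 G21 G22 * transpose_mat (four_block_mat G11 G12 G21 G22)
                    = 1\<^sub>m (p + r)"
    and W_eig: "(X1 @\<^sub>r X2) * centering_mat n * transpose_mat (X1 @\<^sub>r X2)
                 = four_block_mat G11 G12 G21 G22 * D * transpose_mat (four_block_mat G11 G12 G21 G22)"
    and G11_inv: "invertible_mat G11"
  shows
    "let X = X1 @\<^sub>r X2;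
         xbar = (1 / real n) \<cdot>\<^sub>m (X * ones_col n);
         Bh = G21 * inv_mat G11;
         alphah = append_cols_mat (- Bh) (1\<^sub>m r) * xbar;
         U1h = inv_mat (1\<^sub>m p + transpose_mat Bh * Bh) * append_cols_mat (1\<^sub>m p) (transpose_mat Bh)
               * (X - (0\<^sub>m p n @\<^sub>r (alphah * ones_row n)))
     in U1h = (1 / real n) \<cdot>\<^sub>m (X1 * ones_col n * ones_row n)
              + (G11 * transpose_mat G11 * X1 + G11 * transpose_mat G21 * X2) * centering_mat n"
proof -
  let ?T = transpose_mat
  define c where "c = 1 / real n"
  define o1 where "o1 = ones_col n"
  define o2 where "o2 = ones_row n"
  have co1: "o1 \<in> carrier_mat n 1" unfolding o1_def ones_col_def by auto
  have co2: "o2 \<in> carrier_mat 1 n" unfolding o2_def ones_row_def by auto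
  obtain Gi where cGi: "Gi \<in> carrier_mat p p" and GGi: "G11 * Gi = 1\<^sub>m p" and GiG: "Gi * G11 = 1\<^sub>m p"
    using invertible_obtain[OF G11 G11_inv] by blast
  have invG: "inv_mat G11 = Gi" by (rule inv_mat_eq[OF G11 cGi GGi GiG])
  define Bh where "Bh = G21 * Gi"
  define P where "P = G11 * ?T G11"
  define Q where "Q = G11 * ?T G21"
  have cBh: "Bh \<in> carrier_mat r p" unfolding Bh_def using G21 cGi by auto
  have cP: "P \<in> carrier_mat p p" unfolding P_def using G11 by auto
  have cQ: "Q \<in> carrier_mat p r" unfolding Q_def using G11 G21 by auto
  have cTG11: "?T G11 \<in> carrier_mat p p" using G11 by auto
  have cTG21: "?T G21 \<in> carrier_mat p r" using G21 by auto
  have cTGi: "?T Gi \<in> carrier_mat p p" using cGi by auto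
  have e1: "?T G11 * ?T Gi = 1\<^sub>m p"
  proof -
    have "?T (Gi * G11) = ?T G11 * ?T Gi" by (rule transpose_mult[OF cGi G11])
    thus ?thesis using GiG by simp
  qed
  have S: "?T G11 * G11 + ?T G21 * G21 = 1\<^sub>m p"
  proof -
    have "?T (four_block_mat G11 G12 G21 G22) = four_block_mat (?T G11) (?T G21) (?T G12) (?T G22)"
      by (rule transpose_four_block_mat[OF G11 G12 G21 G22])
    hence "four_block_mat (?T G11) (?T G21) (?T G12) (?T G22) * four_block_mat G11 G12 G21 G22 = 1\<^sub>m (p + r)"
      using G_orth1 by simp
    also have "four_block_mat (?T G11) (?T G21) (?T G12) (?T G22) * four_block_mat G11 G12 G21 G22
      = four_block_mat (?T G11 * G11 + ?T G21 * G21) (?T G11 * G12 + ?T G21 * G22)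
          (?T G12 * G11 + ?T G22 * G21) (?T G12 * G12 + ?T G22 * G22)"
      by (rule mult_four_block_mat, insert G11 G12 G21 G22, auto)
    finally have F: "four_block_mat (?T G11 * G11 + ?T G21 * G21) (?T G11 * G12 + ?T G21 * G22)
          (?T G12 * G11 + ?T G22 * G21) (?T G12 * G12 + ?T G22 * G22) = 1\<^sub>m (p + r)" .
    show ?thesis
    proof (rule eq_matI)
      fix i j assume i: "i < dim_row (1\<^sub>m p :: real mat)" and j: "j < dim_col (1\<^sub>m p :: real mat)"
      have "F0 $$ (i,j) = (1\<^sub>m (p + r) :: real mat) $$ (i,j)" if "F0 = 1\<^sub>m (p + r)" for F0 :: "real mat"
        using that by simp
      from this[OF F] show "(?T G11 * G11 + ?T G21 * G21) $$ (i, j) = (1\<^sub>m p :: real mat) $$ (i, j)"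
        using i j G11 G12 G21 G22 by simp
    qed (insert G11 G21, auto)
  qed
  have S': "?T G21 * G21 = 1\<^sub>m p - ?T G11 * G11"
  proof -
    have "?T G21 * G21 = (?T G11 * G11 + ?T G21 * G21) - ?T G11 * G11"
      using G11 G21 by (intro eq_matI, auto)
    thus ?thesis using S by simp
  qed
  have QBh: "Q * Bh = 1\<^sub>m p - P"
  proof -
    have "Q * Bh = G11 * (?T G21 * G21) * Gi" unfolding Q_def Bh_def
    proof -
      have c1: "?T G21 * G21 \<in> carrier_mat p p" using G21 by auto
      have "G11 * (?T G21 * G21) * Gi = G11 * ((?T G21 * G21) * Gi)" using G11 c1 cGi by simp
      also have "(?T G21 * G21) * Gi = ?T G21 * (G21 * Gi)" using cTG21 G21 cGi by simp
      also have "G11 * (?T G21 * (G21 * Gi)) = G11 * ?T G21 * (G21 * Gi)"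
        using G11 cTG21 G21 cGi by (simp del: assoc_mult_mat add: assoc_mult_mat[symmetric, of _ p p _ r _ p])
      finally show "G11 * ?T G21 * (G21 * Gi) = G11 * (?T G21 * G21) * Gi" by simp
    qed
    also have "\<dots> = G11 * (1\<^sub>m p - ?T G11 * G11) * Gi" using S' by simp
    also have "\<dots> = (G11 - P * G11) * Gi" unfolding P_def
    proof -
      have c2: "?T G11 * G11 \<in> carrier_mat p p" using G11 by auto
      have "G11 * (1\<^sub>m p - ?T G11 * G11) = G11 - G11 * (?T G11 * G11)"
        using mult_minus_distrib_mat[OF G11 one_carrier_mat c2] G11 by simp
      also have "G11 * (?T G11 * G11) = G11 * ?T G11 * G11" using G11 cTG11 by simp
      finally show "G11 * (1\<^sub>m p - ?T G11 * G11) * Gi = (G11 - G11 * ?T G11 * G11) * Gi" by simp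
    qed
    also have "\<dots> = G11 * Gi - P * (G11 * Gi)"
      using G11 cGi cP by (simp add: minus_mult_distrib_mat[of _ p p])
    also have "\<dots> = 1\<^sub>m p - P" using GGi cP by simp
    finally show ?thesis .
  qed
  have TBh: "?T Bh = ?T Gi * ?T G21" unfolding Bh_def by (rule transpose_mult[OF G21 cGi])
  have cTBh: "?T Bh \<in> carrier_mat p r" using cBh by auto
  have PTBh: "P * ?T Bh = Q"
  proof -
    have "P * ?T Bh = G11 * (?T G11 * (?T Gi * ?T G21))" unfolding P_def TBh
      by (rule assoc_mult_mat[OF G11 cTG11 mult_carrier_mat[OF cTGi cTG21]])
    also have "?T G11 * (?T Gi * ?T G21) = (?T G11 * ?T Gi) * ?T G21"
      by (rule assoc_mult_mat[symmetric, OF cTG11 cTGi cTG21])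
    finally have "P * ?T Bh = G11 * ((?T G11 * ?T Gi) * ?T G21)" .
    thus ?thesis unfolding e1 Q_def using cTG21 by simp
  qed
  define M where "M = 1\<^sub>m p + ?T Bh * Bh"
  have cM: "M \<in> carrier_mat p p" unfolding M_def using cBh by auto
  have PM: "P * M = 1\<^sub>m p"
  proof -
    have "P * M = P * 1\<^sub>m p + P * (?T Bh * Bh)" unfolding M_def
      by (rule mult_add_distrib_mat[OF cP one_carrier_mat mult_carrier_mat[OF cTBh cBh]])
    also have "P * (?T Bh * Bh) = P * ?T Bh * Bh" by (rule assoc_mult_mat[symmetric, OF cP cTBh cBh])
    finally have "P * M = P + P * ?T Bh * Bh" using cP by simp
    also have "\<dots> = P + (1\<^sub>m p - P)" unfolding PTBh QBh ..
    also have "\<dots> = 1\<^sub>m p" using cP by (intro eq_matI, auto)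
    finally show ?thesis .
  qed
  have MP: "M * P = 1\<^sub>m p" by (rule mat_mult_left_right_inverse[OF cP cM PM])
  have invM: "inv_mat M = P" by (rule inv_mat_eq[OF cM cP MP PM])
  define xb1 where "xb1 = c \<cdot>\<^sub>m (X1 * o1)"
  define xb2 where "xb2 = c \<cdot>\<^sub>m (X2 * o1)"
  have cxb1: "xb1 \<in> carrier_mat p 1" unfolding xb1_def using X1 co1 by auto
  have cxb2: "xb2 \<in> carrier_mat r 1" unfolding xb2_def using X2 co1 by auto
  have xbar: "c \<cdot>\<^sub>m ((X1 @\<^sub>r X2) * o1) = xb1 @\<^sub>r xb2"
    unfolding xb1_def xb2_def append_rows_mult[OF X1 X2 co1]
    by (rule append_rows_smult, insert X1 X2 co1, auto)
  define al where "al = - (Bh * xb1) + xb2"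
  have cal: "al \<in> carrier_mat r 1" unfolding al_def using cBh cxb1 cxb2 by auto
  have alpha: "append_cols_mat (- Bh) (1\<^sub>m r) * (xb1 @\<^sub>r xb2) = al"
    unfolding al_def append_cols_mult[OF uminus_carrier_mat[OF cBh] one_carrier_mat cxb1 cxb2]
    using cBh cxb1 cxb2 by simp
  define Z where "Z = al * o2"
  have cZ: "Z \<in> carrier_mat r n" unfolding Z_def using cal co2 by auto
  have Xm: "(X1 @\<^sub>r X2) - (0\<^sub>m p n @\<^sub>r Z) = X1 @\<^sub>r (X2 - Z)"
  proof -
    have "(X1 @\<^sub>r X2) - (0\<^sub>m p n @\<^sub>r Z) = (X1 - 0\<^sub>m p n) @\<^sub>r (X2 - Z)"
      by (rule append_rows_minus[OF X1 X2 _ cZ], auto)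
    moreover have "X1 - 0\<^sub>m p n = X1" using X1 by (intro eq_matI, auto)
    ultimately show ?thesis by simp
  qed
  have cY: "X2 - Z \<in> carrier_mat r n" using X2 cZ by auto
  have U1: "P * append_cols_mat (1\<^sub>m p) (?T Bh) * (X1 @\<^sub>r (X2 - Z)) = P * X1 + Q * (X2 - Z)"
  proof -
    have ca: "append_cols_mat (1\<^sub>m p) (?T Bh) \<in> carrier_mat p (p + r)"
      unfolding append_cols_mat_def using cTBh by auto
    have "P * append_cols_mat (1\<^sub>m p) (?T Bh) * (X1 @\<^sub>r (X2 - Z))
       = P * (append_cols_mat (1\<^sub>m p) (?T Bh) * (X1 @\<^sub>r (X2 - Z)))"
      by (rule assoc_mult_mat[OF cP ca carrier_append_rows[OF X1 cY]])
    also have "\<dots> = P * (X1 + ?T Bh * (X2 - Z))"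
      using append_cols_mult[OF one_carrier_mat cTBh X1 cY] X1 by simp
    also have "\<dots> = P * X1 + P * ?T Bh * (X2 - Z)"
      using cP X1 cTBh cY by (simp add: mult_add_distrib_mat[of _ p p])
    finally show ?thesis unfolding PTBh .
  qed
  define J where "J = o1 * o2"
  have cJ: "J \<in> carrier_mat n n" unfolding J_def using co1 co2 by auto
  define R where "R = c \<cdot>\<^sub>m (X1 * o1 * o2)"
  have cR: "R \<in> carrier_mat p n" unfolding R_def using X1 co1 co2 by auto
  have R2: "xb1 * o2 = R" unfolding xb1_def R_def using X1 co1 co2
    by (simp add: mult_smult_assoc_mat[of _ p 1])
  have QZ: "Q * Z = - (R - c \<cdot>\<^sub>m (P * X1 * J)) + c \<cdot>\<^sub>m (Q * X2 * J)"
  proof -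
    have "Z = - (Bh * xb1 * o2) + xb2 * o2" unfolding Z_def al_def
      using cBh cxb1 cxb2 co2 by (simp add: add_mult_distrib_mat[of _ r 1])
    hence "Q * Z = Q * (- (Bh * (xb1 * o2))) + Q * (xb2 * o2)"
      using mult_add_distrib_mat[OF cQ uminus_carrier_mat[OF mult_carrier_mat[OF cBh mult_carrier_mat[OF cxb1 co2]]]
         mult_carrier_mat[OF cxb2 co2]] assoc_mult_mat[OF cBh cxb1 co2] by simp
    also have "Q * (- (Bh * (xb1 * o2))) = - (Q * Bh * (xb1 * o2))"
      using assoc_mult_mat[OF cQ cBh mult_carrier_mat[OF cxb1 co2]] cQ cBh
      by (subst uminus_mult_right_mat, auto)
    also have "Q * Bh * (xb1 * o2) = R - c \<cdot>\<^sub>m (P * X1 * J)"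
    proof -
      have "Q * Bh * (xb1 * o2) = (1\<^sub>m p - P) * R" unfolding QBh R2 ..
      also have "\<dots> = R - P * R" using cP cR by (simp add: minus_mult_distrib_mat[of _ p p])
      also have "P * R = c \<cdot>\<^sub>m (P * X1 * J)"
      proof -
        have "P * R = c \<cdot>\<^sub>m (P * (X1 * o1 * o2))" unfolding R_def
          by (rule mult_smult_distrib[OF cP mult_carrier_mat[OF mult_carrier_mat[OF X1 co1] co2]])
        also have "X1 * o1 * o2 = X1 * (o1 * o2)" by (rule assoc_mult_mat[OF X1 co1 co2])
        also have "P * (X1 * (o1 * o2)) = P * X1 * (o1 * o2)"
          by (rule assoc_mult_mat[symmetric, OF cP X1 mult_carrier_mat[OF co1 co2]])
        finally show ?thesis unfolding J_def .
      qed
      finally show ?thesis .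
    qed
    also have "Q * (xb2 * o2) = c \<cdot>\<^sub>m (Q * X2 * J)"
    proof -
      have "xb2 * o2 = c \<cdot>\<^sub>m (X2 * o1 * o2)" unfolding xb2_def
        by (rule mult_smult_assoc_mat[OF mult_carrier_mat[OF X2 co1] co2])
      hence "Q * (xb2 * o2) = c \<cdot>\<^sub>m (Q * (X2 * o1 * o2))"
        using mult_smult_distrib[OF cQ mult_carrier_mat[OF mult_carrier_mat[OF X2 co1] co2]] by simp
      also have "X2 * o1 * o2 = X2 * (o1 * o2)" by (rule assoc_mult_mat[OF X2 co1 co2])
      also have "Q * (X2 * (o1 * o2)) = Q * X2 * (o1 * o2)"
        by (rule assoc_mult_mat[symmetric, OF cQ X2 mult_carrier_mat[OF co1 co2]])
      finally show ?thesis unfolding J_def .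
    qed
    finally show ?thesis .
  qed
  have RHS: "(P * X1 + Q * X2) * centering_mat n
      = P * X1 + Q * X2 - (c \<cdot>\<^sub>m (P * X1 * J) + c \<cdot>\<^sub>m (Q * X2 * J))"
  proof -
    have cPQ: "P * X1 + Q * X2 \<in> carrier_mat p n" using cP cQ X1 X2 by auto
    have "(P * X1 + Q * X2) * centering_mat n = (P * X1 + Q * X2) * (1\<^sub>m n - c \<cdot>\<^sub>m J)"
      unfolding centering_mat_def c_def J_def o1_def o2_def ..
    also have "\<dots> = P * X1 + Q * X2 - (P * X1 + Q * X2) * (c \<cdot>\<^sub>m J)"
      using mult_minus_distrib_mat[OF cPQ one_carrier_mat smult_carrier_mat[OF cJ]] right_mult_one_mat[OF cPQ] by simp
    also have "(P * X1 + Q * X2) * (c \<cdot>\<^sub>m J) = c \<cdot>\<^sub>m (P * X1 * J) + c \<cdot>\<^sub>m (Q * X2 * J)"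
      using mult_smult_distrib[OF cPQ cJ] add_mult_distrib_mat[OF mult_carrier_mat[OF cP X1] mult_carrier_mat[OF cQ X2] cJ]
        add_smult_distrib_left_mat[OF mult_carrier_mat[OF mult_carrier_mat[OF cP X1] cJ] mult_carrier_mat[OF mult_carrier_mat[OF cQ X2] cJ]]
      by simp
    finally show ?thesis .
  qed
  have main: "P * X1 + Q * (X2 - Z) = R + (P * X1 + Q * X2) * centering_mat n"
  proof -
    have "P * X1 + Q * (X2 - Z) = P * X1 + (Q * X2 - Q * Z)"
      using cQ X2 cZ by (simp add: mult_minus_distrib_mat[of _ p r])
    also have "\<dots> = R + (P * X1 + Q * X2 - (c \<cdot>\<^sub>m (P * X1 * J) + c \<cdot>\<^sub>m (Q * X2 * J)))"
      unfolding QZ using cP cQ X1 X2 cJ cR by (intro eq_matI, auto)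
    finally show ?thesis unfolding RHS .
  qed
  have fin: "inv_mat M * append_cols_mat (1\<^sub>m p) (?T Bh) * ((X1 @\<^sub>r X2) - (0\<^sub>m p n @\<^sub>r (append_cols_mat (- Bh) (1\<^sub>m r) * (c \<cdot>\<^sub>m ((X1 @\<^sub>r X2) * o1)) * o2)))
     = c \<cdot>\<^sub>m (X1 * o1 * o2) + (P * X1 + Q * X2) * centering_mat n"
    unfolding invM xbar alpha Z_def[symmetric] Xm U1 main R_def ..
  show ?thesis
    unfolding Let_def invG
    unfolding Bh_def[symmetric] M_def[symmetric] o1_def[symmetric] o2_def[symmetric] c_def[symmetric]
    using fin unfolding P_def Q_def .
qed

end
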